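(* Let $H=(V,E)$ be a graph. (1) Let $\alpha=(\alpha(x))_{x\in V}$ be integers with $\alpha(x)\ge 2$ and let $G$ be $\alpha$-suspended over $H$. If $H$ has a Hamiltonian path, then $G$ has a Hamiltonian path. (2) Let $\ell\ge1$ and let $G$ be $\ell$-suspended over $H$. If $H$ has a Hamiltonian cycle of even length, then $G$ has a Hamiltonian cycle of even length.
   Context: $G$ is $\alpha$-suspended over $H$ if $G$ is the graph on vertex set $\{(x,i): x\in V, 0\le i\le\alpha(x)\}$ which is the union of the paths $((x,0),(x,1),\dots,(x,\alpha(x)))$ for $x\in V$ and the edges $\{(x,0),(y,0)\}$ and $\{(x,\alpha(x)),(y,\alpha(y))\}$ for all $\{x,y\}\in E$. For $\ell\ge1$, $P_\ell$ is the path on $0,\dots,\ell$ and $H\times P_\ell$ the Cartesian product (vertex set $V\times\{0,\dots,\ell\}$, with $(x,i)\sim(y,j)$ iff ($\{x,y\}\in E$ and $i=j$) or ($x=y$ and $|i-j|=1$)); $G$ is $\ell$-suspended over $H$ if $G$ is a spanning subgraph of $H\times P_\ell$ containing all edges $\{(x,i),(x,i+1)\}$ and all edges $\{(x,0),(y,0)\}$, $\{(x,\ell),(y,\ell)\}$ for $\{x,y\}\in E$. *)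

theory Defs
  imports Main
begin

definition graph :: "'v set \<Rightarrow> 'v set set \<Rightarrow> bool" where
  "graph V E \<longleftrightarrow> finite V \<and> (\<forall>e\<in>E. \<exists>x y. e = {x, y} \<and> x \<in> V \<and> y \<in> V \<and> x \<noteq> y)"

definition ham_path :: "'v set \<Rightarrow> 'v set set \<Rightarrow> 'v list \<Rightarrow> bool" where
  "ham_path V E ps \<longleftrightarrow> ps \<noteq> [] \<and> distinct ps \<and> set ps = V \<and>
     (\<forall>i. Suc i < length ps \<longrightarrow> {ps ! i, ps ! Suc i} \<in> E)"

text \<open>A Hamiltonian cycle, given as the cyclic list of its vertices; its length is length ps.\<close>
definition ham_cycle :: "'v set \<Rightarrow> 'v set set \<Rightarrow> 'v list \<Rightarrow> bool" where
  "ham_cycle V E cs \<longleftrightarrow> length cs \<ge> 3 \<and> distinct cs \<and> set cs = V \<and>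
     (\<forall>i. Suc i < length cs \<longrightarrow> {cs ! i, cs ! Suc i} \<in> E) \<and> {last cs, hd cs} \<in> E"

definition susp_vertices :: "'v set \<Rightarrow> ('v \<Rightarrow> nat) \<Rightarrow> ('v \<times> nat) set" where
  "susp_vertices V \<alpha> = {(x, i). x \<in> V \<and> i \<le> \<alpha> x}"

definition susp_edges :: "'v set \<Rightarrow> 'v set set \<Rightarrow> ('v \<Rightarrow> nat) \<Rightarrow> ('v \<times> nat) set set" where
  "susp_edges V E \<alpha> =
     {{(x, i), (x, Suc i)} | x i. x \<in> V \<and> i < \<alpha> x}
   \<union> {{(x, 0), (y, 0)} | x y. {x, y} \<in> E}
   \<union> {{(x, \<alpha> x), (y, \<alpha> y)} | x y. {x, y} \<in> E}"

definition prod_vertices :: "'v set \<Rightarrow> nat \<Rightarrow> ('v \<times> nat) set" where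
  "prod_vertices V l = V \<times> {0..l}"

definition prod_edges :: "'v set \<Rightarrow> 'v set set \<Rightarrow> nat \<Rightarrow> ('v \<times> nat) set set" where
  "prod_edges V E l =
     {{(x, i), (y, i)} | x y i. {x, y} \<in> E \<and> i \<le> l}
   \<union> {{(x, i), (x, Suc i)} | x i. x \<in> V \<and> i < l}"

definition l_suspended :: "('v \<times> nat) set \<Rightarrow> ('v \<times> nat) set set \<Rightarrow> 'v set \<Rightarrow> 'v set set \<Rightarrow> nat \<Rightarrow> bool" where
  "l_suspended VG EG V E l \<longleftrightarrow>
     VG = prod_vertices V l \<and> EG \<subseteq> prod_edges V E l \<and>
     {{(x, i), (x, Suc i)} | x i. x \<in> V \<and> i < l} \<subseteq> EG \<and>
     {{(x, 0), (y, 0)} | x y. {x, y} \<in> E} \<subseteq> EG \<and>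
     {{(x, l), (y, l)} | x y. {x, y} \<in> E} \<subseteq> EG"

end

theory Submission
  imports Defs
begin

fun walk :: "'a set set \<Rightarrow> 'a list \<Rightarrow> bool" where
  "walk E [] = True"
| "walk E [x] = True"
| "walk E (x # y # xs) = ({x, y} \<in> E \<and> walk E (y # xs))"

lemma walk_iff: "walk E xs = (\<forall>i. Suc i < length xs \<longrightarrow> {xs ! i, xs ! Suc i} \<in> E)"
proof (induction E xs rule: walk.induct)
  case (3 E x y xs)
  show ?case
  proof
    assume "walk E (x # y # xs)"
    then have a: "{x, y} \<in> E" and b: "\<forall>i. Suc i < length (y # xs) \<longrightarrow> {(y # xs) ! i, (y # xs) ! Suc i} \<in> E"
      using 3 by auto
    show "\<forall>i. Suc i < length (x # y # xs) \<longrightarrow> {(x # y # xs) ! i, (x # y # xs) ! Suc i} \<in> E"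
    proof (intro allI impI)
      fix i assume "Suc i < length (x # y # xs)"
      then show "{(x # y # xs) ! i, (x # y # xs) ! Suc i} \<in> E" using a b by (cases i) auto
    qed
  next
    assume H: "\<forall>i. Suc i < length (x # y # xs) \<longrightarrow> {(x # y # xs) ! i, (x # y # xs) ! Suc i} \<in> E"
    have "{x, y} \<in> E" using H[rule_format, of 0] by simp
    moreover have "\<forall>i. Suc i < length (y # xs) \<longrightarrow> {(y # xs) ! i, (y # xs) ! Suc i} \<in> E"
    proof (intro allI impI)
      fix i assume "Suc i < length (y # xs)"
      then show "{(y # xs) ! i, (y # xs) ! Suc i} \<in> E" using H[rule_format, of "Suc i"] by simp
    qed
    ultimately show "walk E (x # y # xs)" using 3 by simp
  qed
qed auto

lemma walk_append:
  "walk E (xs @ ys) = (walk E xs \<and> walk E ys \<and> (xs \<noteq> [] \<longrightarrow> ys \<noteq> [] \<longrightarrow> {last xs, hd ys} \<in> E))"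
proof (induction E xs rule: walk.induct)
  case (2 E x)
  then show ?case by (cases ys) auto
qed auto

definition col :: "('v \<Rightarrow> nat) \<Rightarrow> 'v \<Rightarrow> bool \<Rightarrow> ('v \<times> nat) list" where
  "col h x b = (if b then map (\<lambda>i. (x, h x - i)) [0..<Suc (h x)] else map (\<lambda>i. (x, i)) [0..<Suc (h x)])"

lemma col_ne: "col h x b \<noteq> []" by (simp add: col_def)

lemma col_hd: "hd (col h x b) = (x, if b then h x else 0)"
  by (simp add: col_def hd_map del: upt_Suc)

lemma col_last: "last (col h x b) = (x, if b then 0 else h x)"
  by (simp add: col_def last_map del: upt_Suc)

lemma col_set: "set (col h x b) = {x} \<times> {0..h x}"
proof -
  have "(\<lambda>i. h x - i) ` {0..h x} = {0..h x}"
  proof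
    show "{0..h x} \<subseteq> (\<lambda>i. h x - i) ` {0..h x}"
    proof
      fix j assume "j \<in> {0..h x}"
      then show "j \<in> (\<lambda>i. h x - i) ` {0..h x}" by (intro image_eqI[of _ _ "h x - j"]) auto
    qed
  qed auto
  then show ?thesis unfolding col_def by (auto simp del: upt_Suc simp: atLeastLessThanSuc_atLeastAtMost)
qed

lemma col_distinct: "distinct (col h x b)"
  unfolding col_def by (auto simp: distinct_map inj_on_def simp del: upt_Suc)

lemma col_length: "length (col h x b) = Suc (h x)"
  unfolding col_def by simp

lemma col_walk:
  assumes "\<forall>i < h x. {(x, i), (x, Suc i)} \<in> EG"
  shows "walk EG (col h x b)"
proof (cases b)
  case True
  show ?thesis unfolding walk_iff
  proof (intro allI impI)
    fix i assume i: "Suc i < length (col h x b)"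
    then have i': "Suc i < Suc (h x)" by (simp add: col_length)
    have "{(x, h x - Suc i), (x, Suc (h x - Suc i))} \<in> EG" using assms i' by auto
    moreover have "Suc (h x - Suc i) = h x - i" using i' by simp
    ultimately show "{col h x b ! i, col h x b ! Suc i} \<in> EG" using True i'
      unfolding col_def by (simp del: upt_Suc add: insert_commute)
  qed
next
  case False
  show ?thesis unfolding walk_iff
  proof (intro allI impI)
    fix i assume i: "Suc i < length (col h x b)"
    then have i': "Suc i < Suc (h x)" by (simp add: col_length)
    then show "{col h x b ! i, col h x b ! Suc i} \<in> EG" using False assms
      unfolding col_def by (simp del: upt_Suc)
  qed
qed

fun snake :: "('v \<Rightarrow> nat) \<Rightarrow> 'v list \<Rightarrow> bool \<Rightarrow> ('v \<times> nat) list" where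
  "snake h [] b = []"
| "snake h (x # xs) b = col h x b @ snake h xs (\<not> b)"

lemma snake_set: "set (snake h p b) = {(x, i). x \<in> set p \<and> i \<le> h x}"
  by (induction p arbitrary: b) (auto simp: col_set)

lemma snake_distinct: "distinct p \<Longrightarrow> distinct (snake h p b)"
  by (induction p arbitrary: b) (auto simp: col_set col_distinct snake_set)

lemma snake_ne: "p \<noteq> [] \<Longrightarrow> snake h p b \<noteq> []"
  by (cases p) (auto simp: col_ne)

lemma snake_hd: "p \<noteq> [] \<Longrightarrow> hd (snake h p b) = (hd p, if b then h (hd p) else 0)"
  by (cases p) (auto simp: col_ne col_hd)

lemma snake_last: "p \<noteq> [] \<Longrightarrow> last (snake h p b) = (last p, if b = odd (length p) then 0 else h (last p))"
proof (induction p arbitrary: b)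
  case (Cons x xs)
  show ?case
  proof (cases "xs = []")
    case True
    then show ?thesis by (simp add: col_last)
  next
    case False
    then show ?thesis using Cons.IH[of "\<not> b"] snake_ne[OF False] by auto
  qed
qed simp

lemma snake_length_const: "length (snake (\<lambda>_. l) p b) = length p * Suc l"
  by (induction p arbitrary: b) (auto simp: col_length)

lemma snake_walk:
  assumes "walk E p"
    and "\<forall>x\<in>set p. \<forall>i < h x. {(x, i), (x, Suc i)} \<in> EG"
    and "\<forall>x y. {x, y} \<in> E \<longrightarrow> {(x, 0), (y, 0)} \<in> EG \<and> {(x, h x), (y, h y)} \<in> EG"
  shows "walk EG (snake h p b)"
  using assms(1,2)
proof (induction p arbitrary: b)
  case (Cons x xs)
  have w1: "walk EG (col h x b)" using Cons.prems col_walk by auto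
  show ?case
  proof (cases xs)
    case Nil
    then show ?thesis using w1 by simp
  next
    case (Cons y ys)
    have e: "{x, y} \<in> E" using Cons.prems Cons by simp
    have w2: "walk EG (snake h xs (\<not> b))" using Cons.IH[of "\<not> b"] Cons.prems Cons by simp
    have "{last (col h x b), hd (snake h xs (\<not> b))} \<in> EG"
      using e assms(3) Cons by (auto simp: col_last col_hd col_ne)
    then show ?thesis using w1 w2 by (simp add: walk_append)
  qed
qed simp

theorem lemma3p3:
  fixes V :: "'v set" and E :: "'v set set"
  assumes "graph V E"
  shows "(\<forall>(\<alpha>::'v \<Rightarrow> nat) VG EG.
            (\<forall>x\<in>V. \<alpha> x \<ge> 2) \<longrightarrow> VG = susp_vertices V \<alpha> \<longrightarrow> EG = susp_edges V E \<alpha> \<longrightarrow>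
            (\<exists>p. ham_path V E p) \<longrightarrow> (\<exists>q. ham_path VG EG q))
       \<and> (\<forall>(l::nat) VG EG. l \<ge> 1 \<longrightarrow> l_suspended VG EG V E l \<longrightarrow>
            (\<exists>c. ham_cycle V E c \<and> even (length c)) \<longrightarrow>
            (\<exists>d. ham_cycle VG EG d \<and> even (length d)))"
proof (intro conjI allI impI)
  fix \<alpha> :: "'v \<Rightarrow> nat" and VG EG
  assume VG: "VG = susp_vertices V \<alpha>" and EG: "EG = susp_edges V E \<alpha>"
    and "\<exists>p. ham_path V E p"
  then obtain p where p: "ham_path V E p" by blast
  have pw: "walk E p" using p by (simp add: ham_path_def walk_iff)
  have "walk EG (snake \<alpha> p True)"
  proof (rule snake_walk[OF pw])
    show "\<forall>x\<in>set p. \<forall>i<\<alpha> x. {(x, i), (x, Suc i)} \<in> EG"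
      using p unfolding EG susp_edges_def ham_path_def by blast
    show "\<forall>x y. {x, y} \<in> E \<longrightarrow> {(x, 0), (y, 0)} \<in> EG \<and> {(x, \<alpha> x), (y, \<alpha> y)} \<in> EG"
      unfolding EG susp_edges_def by blast
  qed
  moreover have "set (snake \<alpha> p True) = VG"
    using p unfolding VG snake_set susp_vertices_def ham_path_def by auto
  ultimately have "ham_path VG EG (snake \<alpha> p True)"
    using p snake_ne snake_distinct unfolding ham_path_def walk_iff by auto
  then show "\<exists>q. ham_path VG EG q" by blast
next
  fix l :: nat and VG EG
  assume l: "1 \<le> l" and S: "l_suspended VG EG V E l" and "\<exists>c. ham_cycle V E c \<and> even (length c)"
  then obtain c where c: "ham_cycle V E c" and ev: "even (length c)" by blast
  have cne: "c \<noteq> []" using c by (auto simp: ham_cycle_def)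
  have cw: "walk E c" using c by (simp add: ham_cycle_def walk_iff)
  let ?d = "snake (\<lambda>_. l) c True"
  have "walk EG ?d"
  proof (rule snake_walk[OF cw])
    show "\<forall>x\<in>set c. \<forall>i<l. {(x, i), (x, Suc i)} \<in> EG"
      using c S unfolding l_suspended_def ham_cycle_def by blast
    show "\<forall>x y. {x, y} \<in> E \<longrightarrow> {(x, 0), (y, 0)} \<in> EG \<and> {(x, l), (y, l)} \<in> EG"
      using S unfolding l_suspended_def by blast
  qed
  moreover have "set ?d = VG"
    using c S unfolding snake_set l_suspended_def prod_vertices_def ham_cycle_def by auto
  moreover have "{last ?d, hd ?d} \<in> EG"
  proof -
    have "{last c, hd c} \<in> E" using c by (simp add: ham_cycle_def)
    then have "{(last c, l), (hd c, l)} \<in> EG" using S unfolding l_suspended_def by blast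
    then show ?thesis using ev cne by (simp add: snake_last snake_hd)
  qed
  moreover have "length ?d = length c * Suc l" by (rule snake_length_const)
  moreover have "length c \<ge> 3" using c by (simp add: ham_cycle_def)
  ultimately have "ham_cycle VG EG ?d \<and> even (length ?d)"
    using c ev snake_distinct unfolding ham_cycle_def walk_iff by auto
  then show "\<exists>d. ham_cycle VG EG d \<and> even (length d)" by blast
qed

end
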